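(* For $\mu>0$, $x\ge 0$, $y>0$, $$P_{\mu+1}(x,y)^2-P_\mu(x,y)P_{\mu+2}(x,y)>0.$$
   Context: For $\mu>0$, $x>0$, $y\ge0$, $P_{\mu}(x,y)=x^{\frac12(1-\mu)}\int_0^{y} t^{\frac12(\mu-1)}e^{-t-x}I_{\mu-1}(2\sqrt{xt})\,dt$ ($I_\nu$ the modified Bessel function of the first kind); at $x=0$ it is defined by continuity, $P_\mu(0,y)=\gamma(\mu,y)/\Gamma(\mu)$ with $\gamma(\mu,y)=\int_0^y t^{\mu-1}e^{-t}dt$. *)

theory Defs
  imports "HOL-Analysis.Analysis"
begin

definition besselI :: "real \<Rightarrow> real \<Rightarrow> real" where
  "besselI nu z = (\<Sum>k. (z/2) powr (2 * real k + nu) / (fact k * Gamma (real k + nu + 1)))"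

definition lower_gamma :: "real \<Rightarrow> real \<Rightarrow> real" where
  "lower_gamma mu y = integral {0..y} (\<lambda>t. t powr (mu - 1) * exp (- t))"

text \<open>Generalized Marcum-type function P_mu(x,y); at x = 0 defined by continuity.\<close>
definition marcumP :: "real \<Rightarrow> real \<Rightarrow> real \<Rightarrow> real" where
  "marcumP mu x y =
     (if x = 0 then lower_gamma mu y / Gamma mu
      else x powr ((1 - mu) / 2) *
        integral {0..y} (\<lambda>t. t powr ((mu - 1) / 2) * exp (- t - x) *
                               besselI (mu - 1) (2 * sqrt (x * t))))"

end

theory Submission
  imports Defs
begin


lemma turan_seq:
  fixes p :: "nat \<Rightarrow> real"
  assumes dpos: "\<And>k. p k - p (Suc k) > 0"
    and tur: "\<And>k. (p (Suc k) - p (Suc (Suc k)))^2 > (p k - p (Suc k)) * (p (Suc (Suc k)) - p (Suc (Suc (Suc k))))"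
    and lim: "p \<longlonglongrightarrow> 0"
  shows "(p 1)^2 - p 0 * p 2 > 0"
proof -
  define d where "d k = p k - p (Suc k)" for k
  have dp: "d k > 0" for k using dpos d_def by auto
  have td: "d (Suc k) ^ 2 > d k * d (Suc (Suc k))" for k using tur d_def by auto
  define r where "r = d 1 / d 0"
  have dr: "d (Suc k) \<le> r * d k" for k
  proof (induction k)
    case 0 then show ?case using dp[of 0] by (simp add: r_def)
  next
    case (Suc k)
    have "d (Suc (Suc k)) * d k < d (Suc k) * d (Suc k)" using td[of k] by (simp add: power2_eq_square mult.commute)
    also have "\<dots> \<le> d (Suc k) * (r * d k)" using Suc dp[of "Suc k"] by (intro mult_left_mono) auto
    finally have "d (Suc (Suc k)) * d k < (r * d (Suc k)) * d k" by (simp add: algebra_simps)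
    then show ?case using dp[of k] by (simp add: mult_less_cancel_right)
  qed
  have dec: "decseq p" using dp unfolding d_def by (intro decseq_SucI) (auto simp: less_imp_le)
  have pnn: "p k \<ge> 0" for k using decseq_ge[OF dec lim] .
  have E: "(p 1)^2 - p 0 * p 2 = p 1 * (d 1 - d 0) + d 0 * d 1"
    by (simp add: d_def power2_eq_square numeral_2_eq_2 algebra_simps)
  show ?thesis
  proof (cases "d 1 \<ge> d 0")
    case True
    then have "p 1 * (d 1 - d 0) \<ge> 0" using pnn[of 1] by simp
    then show ?thesis using E dp[of 0] dp[of 1] by (smt (verit) mult_pos_pos)
  next
    case False
    have r1: "r < 1" using False dp[of 0] by (simp add: r_def)
    define \<eta> where "\<eta> = r * d 1 - d 2"
    have eta: "\<eta> > 0"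
    proof -
      have "d 2 * d 0 < d 1 * d 1" using td[of 0] by (simp add: power2_eq_square numeral_2_eq_2 mult.commute)
      then have "d 2 < d 1 * d 1 / d 0" using dp[of 0] by (simp add: field_simps)
      then show ?thesis by (simp add: \<eta>_def r_def)
    qed
    have ind: "(1 - r) * (p 1 - p (Suc (Suc N))) \<le> d 1 - d (Suc (Suc N)) - \<eta>" for N
    proof (induction N)
      case 0 then show ?case by (simp add: \<eta>_def d_def numeral_2_eq_2 algebra_simps)
    next
      case (Suc N)
      have "(1 - r) * (p 1 - p (Suc (Suc (Suc N)))) = (1 - r) * (p 1 - p (Suc (Suc N))) + (1-r) * d (Suc (Suc N))"
        by (simp add: d_def algebra_simps)
      also have "\<dots> \<le> d 1 - d (Suc (Suc N)) - \<eta> + (d (Suc (Suc N)) - d (Suc (Suc (Suc N))))"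
        using Suc dr[of "Suc (Suc N)"] by (simp add: algebra_simps)
      finally show ?case by simp
    qed
    have bnd: "(1 - r) * (p 1 - p (Suc (Suc N))) \<le> d 1 - \<eta>" for N
      using ind[of N] dp[of "Suc (Suc N)"] by linarith
    have "(\<lambda>N. (1 - r) * (p 1 - p (Suc (Suc N)))) \<longlonglongrightarrow> (1 - r) * (p 1 - 0)"
      using LIMSEQ_Suc[OF LIMSEQ_Suc[OF lim]] by (intro tendsto_intros)
    then have "(1 - r) * (p 1 - 0) \<le> d 1 - \<eta>"
      by (rule LIMSEQ_le_const2) (use bnd in auto)
    then have "d 1 - (1 - r) * p 1 \<ge> \<eta>" by simp
    moreover have "p 1 * (d 1 - d 0) + d 0 * d 1 = d 0 * (d 1 - (1 - r) * p 1)"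
      using dp[of 0] by (simp add: r_def field_simps)
    ultimately show ?thesis using E eta dp[of 0]
      by (metis diff_gt_0_iff_gt less_le_trans mult_pos_pos)
  qed
qed



lemma GP1: "(z::real) > 0 \<Longrightarrow> Gamma (z + 1) = z * Gamma z"
  by (rule Gamma_plus1) (auto elim!: nonpos_Ints_cases)

lemma Gamma_ge_fact: "(b::real) \<ge> 1 \<Longrightarrow> Gamma (b + real n) \<ge> Gamma b * fact n"
proof (induction n)
  case 0 then show ?case by simp
next
  case (Suc n)
  have "Gamma (b + real (Suc n)) = (b + real n) * Gamma (b + real n)"
    using GP1[of "b + real n"] Suc.prems by (simp add: algebra_simps)
  also have "\<dots> \<ge> (real n + 1) * (Gamma b * fact n)"
    using Suc by (intro mult_mono) auto
  finally show ?case by (simp add: algebra_simps)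
qed

lemma cont_powr: "a > 0 \<Longrightarrow> continuous_on {0..y} (\<lambda>t::real. t powr a)"
  by (rule continuous_on_powr') (auto intro: continuous_intros)

lemma ftc_gamma:
  fixes a y :: real
  assumes a: "a > 0" and y: "y > 0"
  shows "((\<lambda>t. a * (t powr (a-1) * exp(-t)) - t powr a * exp(-t)) has_integral (y powr a * exp (-y))) {0..y}"
proof -
  have cont: "continuous_on {0..y} (\<lambda>t. t powr a * exp(-t))"
    using a by (intro continuous_on_mult cont_powr continuous_on_exp continuous_on_minus continuous_on_id)
  have "((\<lambda>t. a * (t powr (a-1) * exp(-t)) - t powr a * exp(-t)) has_integral
        ((\<lambda>t. t powr a * exp(-t)) y - (\<lambda>t. t powr a * exp(-t)) 0)) {0..y}"
  proof (rule fundamental_theorem_of_calculus_interior)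
    fix t assume "t \<in> {0<..<y}"
    then have t: "t > 0" by auto
    have d1: "((\<lambda>t. t powr a) has_real_derivative a * t powr (a-1)) (at t)"
      by (rule has_real_derivative_powr[OF t])
    have d2: "((\<lambda>t. exp(-t)) has_real_derivative (exp(-t) * (-1))) (at t)"
      by (auto intro!: derivative_eq_intros)
    have "((\<lambda>t. t powr a * exp(-t)) has_real_derivative (a * t powr (a-1) * exp(-t) + t powr a * (exp (-t) * (-1)))) (at t)"
      using DERIV_mult[OF d1 d2] by (simp add: algebra_simps)
    then show "((\<lambda>t. t powr a * exp(-t)) has_vector_derivative (a * (t powr (a-1) * exp(-t)) - t powr a * exp(-t))) (at t)"
      by (simp add: has_real_derivative_iff_has_vector_derivative[symmetric] algebra_simps)
  qed (use y cont in auto)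
  then show ?thesis by simp
qed

lemma lg_integrable:
  fixes a y :: real
  assumes a: "a > 0" and y: "y > 0"
  shows "(\<lambda>t. t powr (a-1) * exp(-t)) integrable_on {0..y}"
proof -
  have i1: "(\<lambda>t. t powr a * exp(-t)) integrable_on {0..y}"
    using a by (intro integrable_continuous_interval continuous_on_mult cont_powr continuous_on_exp continuous_on_minus continuous_on_id)
  have "(\<lambda>t. (a * (t powr (a-1) * exp(-t)) - t powr a * exp(-t)) + t powr a * exp(-t)) integrable_on {0..y}"
    using has_integral_integrable[OF ftc_gamma[OF a y]] i1 by (intro integrable_add) auto
  then have "(\<lambda>t. a * (t powr (a-1) * exp(-t))) integrable_on {0..y}" by simp
  then show ?thesis using a by simp
qed

lemma lg_rec:
  fixes a y :: real
  assumes a: "a > 0" and y: "y > 0"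
  shows "a * lower_gamma a y - lower_gamma (a+1) y = y powr a * exp (-y)"
proof -
  have i1: "(\<lambda>t. t powr a * exp(-t)) integrable_on {0..y}"
    using a by (intro integrable_continuous_interval continuous_on_mult cont_powr continuous_on_exp continuous_on_minus continuous_on_id)
  have "integral {0..y} (\<lambda>t. a * (t powr (a-1) * exp(-t)) - t powr a * exp(-t)) = y powr a * exp (-y)"
    using ftc_gamma[OF a y] by (simp add: has_integral_integrable_integral)
  moreover have "integral {0..y} (\<lambda>t. a * (t powr (a-1) * exp(-t)) - t powr a * exp(-t))
     = a * lower_gamma a y - lower_gamma (a+1) y"
    unfolding lower_gamma_def using integrable_on_mult_right[OF lg_integrable[OF a y], of a] i1
    by (subst integral_diff) auto
  ultimately show ?thesis by simp
qed

lemma lg_nonneg: "0 < (a::real) \<Longrightarrow> 0 < y \<Longrightarrow> lower_gamma a y \<ge> 0"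
  unfolding lower_gamma_def by (intro integral_nonneg lg_integrable) auto

lemma lg_le:
  fixes a y :: real
  assumes a: "a > 0" and y: "y > 0"
  shows "lower_gamma a y \<le> y powr a / a"
proof -
  have "((\<lambda>t. t powr (a-1)) has_integral ((\<lambda>t. t powr a / a) y - (\<lambda>t. t powr a / a) 0)) {0..y}"
  proof (rule fundamental_theorem_of_calculus_interior)
    fix t assume "t \<in> {0<..<y}"
    then have t: "t > 0" by auto
    have "((\<lambda>t. t powr a / a) has_real_derivative (a * t powr (a-1) / a)) (at t)"
      by (intro DERIV_cdivide has_real_derivative_powr t)
    then show "((\<lambda>t. t powr a / a) has_vector_derivative (t powr (a-1))) (at t)"
      using a by (simp add: has_real_derivative_iff_has_vector_derivative[symmetric])
  qed (use y a in \<open>auto intro!: cont_powr continuous_intros\<close>)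
  then have h: "((\<lambda>t. t powr (a-1)) has_integral (y powr a / a)) {0..y}" by simp
  show ?thesis unfolding lower_gamma_def
    using integral_le[OF lg_integrable[OF a y] has_integral_integrable[OF h]] h
    by (simp add: has_integral_integrable_integral mult_left_le)
qed



lemma summ_bes:
  fixes b c :: real
  assumes b: "b > 0" and c: "c \<ge> 0"
  shows "summable (\<lambda>k. c^k / (fact k * Gamma (real k + b)))"
proof (rule summable_comparison_test'[where N=1])
  show "summable (\<lambda>k. (1 / Gamma (b+1)) * (inverse (fact k) * c^k))"
    by (intro summable_mult summable_exp)
next
  fix k :: nat assume k: "1 \<le> k"
  have g1: "Gamma (b+1) > 0" using b by simp
  have "Gamma ((b+1) + real (k-1)) \<ge> Gamma (b+1) * fact (k-1)"
    using b by (intro Gamma_ge_fact) auto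
  moreover have "(b+1) + real (k-1) = real k + b" using k by simp
  moreover have "fact (k-1) \<ge> (1::real)" by simp
  ultimately have G: "Gamma (real k + b) \<ge> Gamma (b+1)"
    using g1 by (smt (verit) mult_le_cancel_left1)
  have pos: "Gamma (real k + b) > 0" using b by simp
  have "norm (c^k / (fact k * Gamma (real k + b))) = c^k / fact k / Gamma (real k + b)"
    using c pos by simp
  also have "\<dots> \<le> c^k / fact k / Gamma (b+1)"
    using G g1 c by (intro divide_left_mono) auto
  finally show "norm (c^k / (fact k * Gamma (real k + b))) \<le> (1 / Gamma (b+1)) * (inverse (fact k) * c^k)"
    by (simp add: field_simps)
qed

lemma alg_id:
  fixes g1 g2 f1 f2 si sn sni u v w c :: real
  assumes "g1 > 0" "g2 > 0" "f1 > 0" "f2 > 0" "u > 0" "v > 0" "w > 0"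
    "sn = si * sni" "c = v - u"
  shows "si / (f1 * (u * g1)) * (sni / (f2 * g2))
       - si / (f1 * g1) * (sni / (f2 * (v * g2)))
     = sn * (c * w / ((u * g1) * (v * g2) * f1 * (w * f2)))"
  using assms(1-8) unfolding assms(9) by (simp add: field_simps)

lemma turan_coef_identity:
  fixes A s :: real and n i :: nat
  assumes A: "A > 0" and i: "i \<le> n"
  shows "s^i / (fact i * Gamma (real i + A + 1)) * (s^(n-i) / (fact (n-i) * Gamma (real (n-i) + A + 1)))
       - s^i / (fact i * Gamma (real i + A)) * (s^(n-i) / (fact (n-i) * Gamma (real (n-i) + A + 2)))
     = s^n * ((real n + 1 - 2 * real i) * (real n + 1 - real i)
        / (Gamma (real i + A + 1) * Gamma (real n + A + 2 - real i) * fact i * fact (n + 1 - i)))"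
proof -
  have sp: "s^n = s^i * s^(n-i)" using i by (simp add: power_add[symmetric])
  have G1: "Gamma (real i + A + 1) = (real i + A) * Gamma (real i + A)"
    using GP1[of "real i + A"] A by simp
  have G2: "Gamma (real n + A + 2 - real i) = (real n - real i + A + 1) * Gamma (real (n-i) + A + 1)"
    using GP1[of "real n - real i + A + 1"] A i by (simp add: algebra_simps of_nat_diff)
  have G3: "Gamma (real (n-i) + A + 2) = (real n - real i + A + 1) * Gamma (real (n-i) + A + 1)"
    using GP1[of "real n - real i + A + 1"] A i by (simp add: algebra_simps of_nat_diff)
  have F: "fact (n + 1 - i) = (real n + 1 - real i) * (fact (n - i) :: real)"
  proof -
    have "n + 1 - i = Suc (n - i)" using i by simp
    then show ?thesis using i by (simp add: of_nat_diff)
  qed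
  have p1: "Gamma (real i + A) > 0" using A by simp
  have p2: "Gamma (real (n-i) + A + 1) > 0" using A i by simp
  have q1: "real i + A > 0" using A by simp
  have q2: "real n - real i + A + 1 > 0" using A i by simp
  have q3: "real n + 1 - real i > 0" using i by simp
  show ?thesis
    unfolding G1 G2 G3 F
    by (rule alg_id[OF p1 p2 _ _ q1 q2 q3 sp]) auto
qed


lemma coef_nonneg:
  fixes A :: real and n :: nat
  assumes A: "A > 0"
  shows "(\<Sum>i\<le>n. (real n + 1 - 2 * real i) * (real n + 1 - real i)
        / (Gamma (real i + A + 1) * Gamma (real n + A + 2 - real i) * fact i * fact (n + 1 - i))) \<ge> 0"
proof -
  define V where "V i = 1 / (Gamma (real i + A + 1) * Gamma (real n + A + 2 - real i) * fact i * fact (n + 1 - i))" for i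
  define m where "m = Suc n"
  have Vsym: "V (m - i) = V i" if "i \<le> m" for i
    using that unfolding V_def m_def by (simp add: of_nat_diff algebra_simps)
  have Vnn: "V i \<ge> 0" if "i \<le> m" for i
  proof -
    have "real n + A + 2 - real i > 0" using that A unfolding m_def by simp
    then show ?thesis unfolding V_def using A by (simp add: less_imp_le)
  qed
  define f where "f i = (real n + 1 - 2 * real i) * (real n + 1 - real i) * V i" for i
  have S1: "(\<Sum>i\<le>n. (real n + 1 - 2 * real i) * (real n + 1 - real i)
        / (Gamma (real i + A + 1) * Gamma (real n + A + 2 - real i) * fact i * fact (n + 1 - i))) = (\<Sum>i\<le>n. f i)"
    unfolding f_def V_def by simp
  have S2: "(\<Sum>i\<le>n. f i) = (\<Sum>i\<le>m. f i)"
    unfolding m_def by (simp add: f_def)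
  have S3: "(\<Sum>i\<le>m. f i) = (\<Sum>i\<le>m. f (m - i))"
    using sum.atLeastAtMost_rev[of f 0 m] by (simp add: atLeast0AtMost)
  have S4: "(\<Sum>i\<le>m. f (m - i)) = (\<Sum>i\<le>m. (2 * real i - real n - 1) * real i * V i)"
    by (rule sum.cong) (auto simp: f_def Vsym[unfolded m_def] of_nat_diff m_def algebra_simps)
  have "2 * (\<Sum>i\<le>m. f i) = (\<Sum>i\<le>m. f i) + (\<Sum>i\<le>m. (2 * real i - real n - 1) * real i * V i)"
    using S3 S4 by simp
  also have "\<dots> = (\<Sum>i\<le>m. (real n + 1 - 2 * real i)^2 * V i)"
    unfolding sum.distrib[symmetric] by (rule sum.cong) (auto simp: f_def power2_eq_square algebra_simps)
  also have "\<dots> \<ge> 0" using Vnn by (intro sum_nonneg) auto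
  finally show ?thesis using S1 S2 by simp
qed


definition Dser :: "real \<Rightarrow> real \<Rightarrow> real" where
  "Dser b s = (\<Sum>k. s^k / (fact k * Gamma (real k + b)))"

lemma D_turan:
  fixes A s :: real
  assumes A: "A > 0" and s: "s \<ge> 0"
  shows "(Dser (A+1) s)^2 - Dser A s * Dser (A+2) s > 0"
proof -
  define a where "a b k = s^k / (fact k * Gamma (real k + b))" for b k
  have sa: "summable (\<lambda>k. norm (a b k))" if "b > 0" for b
  proof -
    have "norm (a b k) = a b k" for k using that s unfolding a_def by simp
    then show ?thesis using summ_bes[OF that s] unfolding a_def by simp
  qed
  have c1: "(\<lambda>n. \<Sum>i\<le>n. a (A+1) i * a (A+1) (n - i)) sums (Dser (A+1) s * Dser (A+1) s)"
    using Cauchy_product_sums[OF sa sa] A unfolding Dser_def a_def by simp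
  have c2: "(\<lambda>n. \<Sum>i\<le>n. a A i * a (A+2) (n - i)) sums (Dser A s * Dser (A+2) s)"
    using Cauchy_product_sums[OF sa sa] A unfolding Dser_def a_def by simp
  define T where "T n = (\<Sum>i\<le>n. a (A+1) i * a (A+1) (n - i)) - (\<Sum>i\<le>n. a A i * a (A+2) (n - i))" for n
  have cT: "T sums ((Dser (A+1) s)^2 - Dser A s * Dser (A+2) s)"
    unfolding T_def power2_eq_square by (intro sums_diff c1 c2)
  have Tn: "T n = s^n * (\<Sum>i\<le>n. (real n + 1 - 2 * real i) * (real n + 1 - real i)
        / (Gamma (real i + A + 1) * Gamma (real n + A + 2 - real i) * fact i * fact (n + 1 - i)))" for n
  proof -
    have "T n = (\<Sum>i\<le>n. a (A+1) i * a (A+1) (n - i) - a A i * a (A+2) (n - i))"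
      unfolding T_def by (simp add: sum_subtractf)
    also have "\<dots> = (\<Sum>i\<le>n. s^n * ((real n + 1 - 2 * real i) * (real n + 1 - real i)
        / (Gamma (real i + A + 1) * Gamma (real n + A + 2 - real i) * fact i * fact (n + 1 - i))))"
    proof (rule sum.cong[OF refl])
      fix i assume "i \<in> {..n}"
      then have i: "i \<le> n" by simp
      show "a (A+1) i * a (A+1) (n - i) - a A i * a (A+2) (n - i) = s^n * ((real n + 1 - 2 * real i) * (real n + 1 - real i)
        / (Gamma (real i + A + 1) * Gamma (real n + A + 2 - real i) * fact i * fact (n + 1 - i)))"
        using turan_coef_identity[OF A i, of s] unfolding a_def by (simp add: add.assoc)
    qed
    also have "\<dots> = s^n * (\<Sum>i\<le>n. (real n + 1 - 2 * real i) * (real n + 1 - real i)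
        / (Gamma (real i + A + 1) * Gamma (real n + A + 2 - real i) * fact i * fact (n + 1 - i)))"
      by (simp add: sum_distrib_left)
    finally show ?thesis .
  qed
  have Tnn: "T n \<ge> 0" for n unfolding Tn using coef_nonneg[OF A, of n] s by simp
  have T0: "T 0 > 0"
  proof -
    have "T 0 = 1 / (Gamma (A + 1) * Gamma (A + 2))"
      using Tn[of 0] by (simp add: add.commute)
    then show ?thesis using A by simp
  qed
  show ?thesis using suminf_pos2[OF sums_summable[OF cT] Tnn T0] sums_unique[OF cT] by simp
qed



definition wP :: "real \<Rightarrow> nat \<Rightarrow> real" where "wP x n = exp (-x) * x^n / fact n"
definition gR :: "real \<Rightarrow> real \<Rightarrow> real" where "gR y a = lower_gamma a y / Gamma a"
definition Pser :: "real \<Rightarrow> real \<Rightarrow> real \<Rightarrow> real" where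
  "Pser x y v = (\<Sum>n. wP x n * gR y (v + real n))"

lemma wP_nonneg: "x \<ge> 0 \<Longrightarrow> wP x n \<ge> 0" by (simp add: wP_def)

lemma wP_sums: "wP x sums 1"
proof -
  have "(\<lambda>n. exp (-x) * (x^n /\<^sub>R fact n)) sums (exp (-x) * exp x)"
    by (intro sums_mult exp_converges)
  moreover have "exp (-x) * exp x = 1" by (simp add: exp_minus_inverse mult.commute)
  moreover have "(\<lambda>n. exp (-x) * (x^n /\<^sub>R fact n)) = wP x"
    by (auto simp: wP_def fun_eq_iff divide_inverse_commute)
  ultimately show ?thesis by simp
qed

lemma gR_nonneg: "a > 0 \<Longrightarrow> y > 0 \<Longrightarrow> gR y a \<ge> 0"
  unfolding gR_def using lg_nonneg[of a y] by simp

lemma gR_le: assumes "a > 0" "y > 0" shows "gR y a \<le> y powr a / Gamma (a + 1)"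
proof -
  have "gR y a \<le> (y powr a / a) / Gamma a" unfolding gR_def
    using lg_le[OF assms] assms by (intro divide_right_mono) auto
  then show ?thesis using GP1[of a] assms by simp
qed

lemma gR_diff: assumes a: "a > 0" and y: "y > 0"
  shows "gR y a - gR y (a + 1) = y powr a * exp (-y) / Gamma (a + 1)"
proof -
  have G: "Gamma (a + 1) = a * Gamma a" using GP1[OF a] .
  have gp: "Gamma a > 0" using a by simp
  have "gR y a - gR y (a + 1) = (a * lower_gamma a y - lower_gamma (a+1) y) / Gamma (a + 1)"
    unfolding gR_def G using a gp by (simp add: diff_divide_distrib)
  then show ?thesis using lg_rec[OF a y] by simp
qed

lemma gR_dec: assumes a: "a > 0" and y: "y > 0" shows "gR y (a + real n) \<le> gR y a"
proof (induction n)
  case 0 then show ?case by simp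
next
  case (Suc n)
  have "gR y (a + real n) - gR y (a + real n + 1) \<ge> 0"
    using gR_diff[of "a + real n" y] a y by simp
  moreover have e: "a + real (Suc n) = a + real n + 1" by simp
  ultimately show ?case unfolding e using Suc by linarith
qed

lemma Pser_summable: assumes v: "v > 0" and y: "y > 0" and x: "x \<ge> 0"
  shows "summable (\<lambda>n. wP x n * gR y (v + real n))"
proof (rule summable_comparison_test'[where N=0])
  show "summable (\<lambda>n. gR y v * wP x n)" using wP_sums by (intro summable_mult sums_summable)
next
  fix n :: nat
  have "0 \<le> gR y (v + real n)" using v y by (intro gR_nonneg) auto
  then show "norm (wP x n * gR y (v + real n)) \<le> gR y v * wP x n"
    using gR_dec[OF v y, of n] wP_nonneg[OF x, of n] by (metis mult.commute mult_left_mono abs_of_nonneg mult_nonneg_nonneg real_norm_def)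
qed

lemma Pser_nonneg: "v > 0 \<Longrightarrow> y > 0 \<Longrightarrow> x \<ge> 0 \<Longrightarrow> Pser x y v \<ge> 0"
  unfolding Pser_def by (intro suminf_nonneg Pser_summable mult_nonneg_nonneg wP_nonneg gR_nonneg) auto

lemma Pser_le: assumes v: "v > 0" and y: "y > 0" and x: "x \<ge> 0"
  shows "Pser x y v \<le> gR y v"
proof -
  have "Pser x y v \<le> (\<Sum>n. gR y v * wP x n)"
    unfolding Pser_def
  proof (rule suminf_le)
    fix n
    show "wP x n * gR y (v + real n) \<le> gR y v * wP x n"
      using gR_dec[OF v y, of n] wP_nonneg[OF x, of n] by (metis mult.commute mult_left_mono)
  qed (use Pser_summable[OF v y x] wP_sums in \<open>auto intro: summable_mult sums_summable\<close>)
  also have "\<dots> = gR y v" using sums_unique[OF wP_sums] sums_summable[OF wP_sums]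
    by (simp add: suminf_mult)
  finally show ?thesis .
qed

lemma Pser_diff: assumes v: "v > 0" and y: "y > 0" and x: "x \<ge> 0"
  shows "Pser x y v - Pser x y (v + 1) = exp (-x) * exp (-y) * y powr v * Dser (v + 1) (x * y)"
proof -
  have "Pser x y v - Pser x y (v + 1) = (\<Sum>n. wP x n * gR y (v + real n) - wP x n * gR y (v + 1 + real n))"
    unfolding Pser_def using Pser_summable[OF v y x] Pser_summable[of "v+1" y x] v y x
    by (subst suminf_diff) auto
  also have "\<dots> = (\<Sum>n. (exp (-x) * exp (-y) * y powr v) * ((x*y)^n / (fact n * Gamma (real n + (v + 1)))))"
  proof (rule suminf_cong)
    fix n
    have "wP x n * gR y (v + real n) - wP x n * gR y (v + 1 + real n) = wP x n * (gR y (v + real n) - gR y (v + real n + 1))"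
      by (simp add: algebra_simps)
    also have "\<dots> = wP x n * (y powr (v + real n) * exp (-y) / Gamma (v + real n + 1))"
      using gR_diff[of "v + real n" y] v y by simp
    also have "\<dots> = (exp (-x) * exp (-y) * y powr v) * ((x*y)^n / (fact n * Gamma (real n + (v + 1))))"
      using y by (simp add: wP_def powr_add powr_realpow power_mult_distrib algebra_simps)
    finally show "wP x n * gR y (v + real n) - wP x n * gR y (v + 1 + real n) =
       (exp (-x) * exp (-y) * y powr v) * ((x*y)^n / (fact n * Gamma (real n + (v + 1))))" .
  qed
  also have "\<dots> = exp (-x) * exp (-y) * y powr v * Dser (v + 1) (x * y)"
    unfolding Dser_def using summ_bes[of "v+1" "x*y"] v y x by (subst suminf_mult) auto
  finally show ?thesis .
qed

lemma Pser_lim: assumes v: "v > 0" and y: "y > 0" and x: "x \<ge> 0"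
  shows "(\<lambda>k. Pser x y (v + real k)) \<longlonglongrightarrow> 0"
proof (rule tendsto_sandwich[where f="\<lambda>_. 0" and h="\<lambda>k. (y powr v / Gamma (v + 1)) * (inverse (fact k) * y^k)"])
  show "\<forall>\<^sub>F k in sequentially. 0 \<le> Pser x y (v + real k)"
    using v y x by (intro always_eventually allI Pser_nonneg) auto
  show "\<forall>\<^sub>F k in sequentially. Pser x y (v + real k) \<le> (y powr v / Gamma (v + 1)) * (inverse (fact k) * y^k)"
  proof (intro always_eventually allI)
    fix k :: nat
    have "Pser x y (v + real k) \<le> gR y (v + real k)" using Pser_le[of "v + real k" y x] v y x by simp
    also have "\<dots> \<le> y powr (v + real k) / Gamma (v + real k + 1)" using gR_le[of "v + real k" y] v y by simp
    also have "\<dots> \<le> y powr (v + real k) / (Gamma (v + 1) * fact k)"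
    proof -
      have "Gamma (v + 1 + real k) \<ge> Gamma (v + 1) * fact k" using v by (intro Gamma_ge_fact) auto
      then have g: "Gamma (v + real k + 1) \<ge> Gamma (v + 1) * fact k" by (simp add: add_ac)
      have p1: "Gamma (v + 1) * fact k > 0" using v by simp
      have p2: "Gamma (v + real k + 1) > 0" using v by simp
      show ?thesis using y g p1 p2 by (intro divide_left_mono) auto
    qed
    also have "\<dots> = (y powr v / Gamma (v + 1)) * (inverse (fact k) * y^k)"
      using y by (simp add: powr_add powr_realpow field_simps)
    finally show "Pser x y (v + real k) \<le> (y powr v / Gamma (v + 1)) * (inverse (fact k) * y^k)" .
  qed
  show "(\<lambda>k. (y powr v / Gamma (v + 1)) * (inverse (fact k) * y^k)) \<longlonglongrightarrow> 0"
    by (intro tendsto_mult_right_zero tendsto_mult_left_zero summable_LIMSEQ_zero[OF summable_exp[of y]])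
qed simp



definition uT :: "real \<Rightarrow> real \<Rightarrow> nat \<Rightarrow> real \<Rightarrow> real" where
  "uT x v k t = wP x k / Gamma (v + real k) * (t powr ((v + real k) - 1) * exp (-t))"

lemma uT_alt: assumes t: "t > 0"
  shows "uT x v k t = (exp (-x) * t powr (v - 1) * exp (-t)) * ((x*t)^k / (fact k * Gamma (real k + v)))"
proof -
  have "t powr ((v + real k) - 1) = t powr (v - 1) * t^k"
    using t by (simp add: powr_add[symmetric] powr_realpow[symmetric] algebra_simps)
  then show ?thesis unfolding uT_def wP_def by (simp add: power_mult_distrib algebra_simps)
qed

lemma uT_summable: "t > 0 \<Longrightarrow> x \<ge> 0 \<Longrightarrow> v > 0 \<Longrightarrow> summable (\<lambda>k. uT x v k t)"
  unfolding uT_alt by (intro summable_mult summ_bes) auto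

lemma uT_nonneg: "t \<ge> 0 \<Longrightarrow> x \<ge> 0 \<Longrightarrow> v > 0 \<Longrightarrow> uT x v k t \<ge> 0"
  unfolding uT_def wP_def by (intro mult_nonneg_nonneg divide_nonneg_pos) auto

lemma term_id:
  assumes x: "x > 0" and t: "t > 0"
  shows "x powr ((1 - v)/2) * (t powr ((v - 1)/2) * exp(-t-x)) *
     ((2 * sqrt(x*t)/2) powr (2 * real k + (v-1)) / (fact k * Gamma (real k + (v-1) + 1)))
   = uT x v k t"
proof -
  define e where "e = 2 * real k + (v-1)"
  have s1: "2 * sqrt(x*t)/2 = (x*t) powr (1/2)" using x t by (simp add: powr_half_sqrt)
  have s2: "((x*t) powr (1/2)) powr e = x powr (e/2) * t powr (e/2)"
    by (simp add: powr_powr powr_mult)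
  have s3: "x powr ((1 - v)/2) * x powr (e/2) = x^k"
  proof -
    have "x powr ((1 - v)/2) * x powr (e/2) = x powr (real k)"
      unfolding powr_add[symmetric] e_def by (simp add: field_simps)
    then show ?thesis using x by (simp add: powr_realpow)
  qed
  have s4: "t powr ((v - 1)/2) * t powr (e/2) = t powr ((v + real k) - 1)"
  proof -
    have "(v - 1)/2 + (2 * real k + (v-1))/2 = (v + real k) - 1" by (simp add: field_simps)
    then show ?thesis unfolding powr_add[symmetric] e_def by simp
  qed
  have g: "real k + (v-1) + 1 = v + real k" by simp
  have "x powr ((1 - v)/2) * (t powr ((v - 1)/2) * exp(-t-x)) *
     ((2 * sqrt(x*t)/2) powr e / (fact k * Gamma (real k + (v-1) + 1)))
     = (x powr ((1 - v)/2) * x powr (e/2)) * (t powr ((v - 1)/2) * t powr (e/2)) * exp(-t-x) / (fact k * Gamma (v + real k))"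
    unfolding s1 s2 g by (simp add: algebra_simps)
  also have "\<dots> = uT x v k t"
    unfolding s3 s4 uT_def wP_def by (simp add: exp_diff exp_minus field_simps)
  finally show ?thesis unfolding e_def .
qed

lemma uT_sums:
  assumes x: "x > 0" and t: "t > 0" and v: "v > 0"
  shows "(\<lambda>k. uT x v k t) sums (x powr ((1 - v)/2) * (t powr ((v - 1)/2) * exp(-t-x) * besselI (v - 1) (2 * sqrt (x * t))))"
proof -
  define C where "C = x powr ((1 - v)/2) * (t powr ((v - 1)/2) * exp(-t-x))"
  have C: "C > 0" using x t by (simp add: C_def)
  define b where "b k = (2 * sqrt(x*t)/2) powr (2 * real k + (v-1)) / (fact k * Gamma (real k + (v-1) + 1))" for k
  have ub: "uT x v k t = C * b k" for k using term_id[OF x t] unfolding C_def b_def by simp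
  have bs: "b k = uT x v k t / C" for k using ub[of k] C by simp
  have sb: "summable b" unfolding bs[abs_def] using uT_summable[of t x v] x t v by (intro summable_divide) auto
  have "(\<lambda>k. C * b k) sums (C * suminf b)" using sb by (intro sums_mult summable_sums)
  moreover have "suminf b = besselI (v - 1) (2 * sqrt (x * t))"
    unfolding besselI_def b_def by simp
  ultimately show ?thesis unfolding ub C_def by (simp add: mult.assoc)
qed

lemma marcum_Pser:
  assumes v: "v > 0" and x: "x \<ge> 0" and y: "y > 0"
  shows "marcumP v x y = Pser x y v"
proof (cases "x = 0")
  case True
  have "(\<lambda>n. wP x n * gR y (v + real n)) = (\<lambda>n. if n = 0 then gR y (v + real n) else 0)"
    using True by (auto simp: wP_def fun_eq_iff)
  then have "(\<lambda>n. wP x n * gR y (v + real n)) sums gR y (v + real 0)"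
    using sums_single[of 0 "\<lambda>n. gR y (v + real n)"] by simp
  then have "Pser x y v = gR y v" unfolding Pser_def by (simp add: sums_iff)
  then show ?thesis using True by (simp add: marcumP_def gR_def)
next
  case False
  then have xp: "x > 0" using x by simp
  define G where "G t = x powr ((1 - v)/2) * (t powr ((v - 1)/2) * exp(-t-x) * besselI (v - 1) (2 * sqrt (x * t)))" for t
  define f where "f N t = (\<Sum>k<N. uT x v k t)" for N t
  have ui: "(uT x v k) integrable_on {0..y}" for k
  proof -
    have "(\<lambda>t. wP x k / Gamma (v + real k) * (t powr ((v + real k) - 1) * exp (-t))) integrable_on {0..y}"
      using v y by (intro integrable_on_mult_right lg_integrable) auto
    then show ?thesis by (simp add: uT_def[abs_def])
  qed
  have uint: "integral {0..y} (uT x v k) = wP x k * gR y (v + real k)" for k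
    unfolding uT_def[abs_def] gR_def lower_gamma_def by simp
  have fint: "integral {0..y} (f N) = (\<Sum>k<N. wP x k * gR y (v + real k))" for N
    unfolding f_def[abs_def] using ui by (subst integral_sum) (auto simp: uint)
  have MC: "G integrable_on {0..y} \<and> ((\<lambda>N. integral {0..y} (f N)) \<longlonglongrightarrow> integral {0..y} G)"
  proof (rule monotone_convergence_increasing)
    show "f N integrable_on {0..y}" for N unfolding f_def[abs_def] using ui by (intro integrable_sum) auto
    show "f N t \<le> f (Suc N) t" if "t \<in> {0..y}" for N t
      using that uT_nonneg[of t x v N] x v by (simp add: f_def)
    show "(\<lambda>N. f N t) \<longlonglongrightarrow> G t" if "t \<in> {0..y}" for t
    proof (cases "t = 0")
      case True
      then show ?thesis by (simp add: f_def uT_def G_def)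
    next
      case False
      then have tp: "t > 0" using that by simp
      show ?thesis unfolding f_def G_def using uT_sums[OF xp tp v]
        by (simp add: sums_def)
    qed
    show "bounded (range (\<lambda>N. integral {0..y} (f N)))"
      unfolding bounded_iff
    proof (intro exI ballI)
      fix z assume "z \<in> range (\<lambda>N. integral {0..y} (f N))"
      then obtain N where z: "z = (\<Sum>k<N. wP x k * gR y (v + real k))" using fint by auto
      have nn: "0 \<le> wP x k * gR y (v + real k)" for k
        using v y x by (intro mult_nonneg_nonneg wP_nonneg gR_nonneg) auto
      have "z \<ge> 0" unfolding z using nn by (intro sum_nonneg) auto
      moreover have "z \<le> Pser x y v" unfolding z Pser_def
        using Pser_summable[OF v y x] nn by (intro sum_le_suminf) auto
      ultimately show "norm z \<le> Pser x y v" by simp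
    qed
  qed
  have "(\<lambda>N. integral {0..y} (f N)) \<longlonglongrightarrow> Pser x y v"
    unfolding fint Pser_def by (rule summable_LIMSEQ[OF Pser_summable[OF v y x]])
  then have "integral {0..y} G = Pser x y v" using MC LIMSEQ_unique by blast
  moreover have "integral {0..y} G = marcumP v x y"
    unfolding G_def marcumP_def using False by simp
  ultimately show ?thesis by simp
qed



lemma Dser_pos: assumes b: "b > 0" and s: "s \<ge> 0" shows "Dser b s > 0"
  unfolding Dser_def
proof (rule suminf_pos2[where i=0])
  show "summable (\<lambda>k. s^k / (fact k * Gamma (real k + b)))" using summ_bes[OF b s] .
  show "0 \<le> s^k / (fact k * Gamma (real k + b))" for k using b s by simp
  show "0 < s^0 / (fact 0 * Gamma (real 0 + b))" using b by simp
qed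

theorem corollary4:
  fixes mu x y :: real
  assumes "mu > 0" and "x \<ge> 0" and "y > 0"
  shows "(marcumP (mu + 1) x y)\<^sup>2 - marcumP mu x y * marcumP (mu + 2) x y > 0"
proof -
  note mu = assms(1) and x = assms(2) and y = assms(3)
  define p where "p k = Pser x y (mu + real k)" for k
  define K where "K = exp (-x) * exp (-y)"
  have K: "K > 0" by (simp add: K_def)
  have pd: "p k - p (Suc k) = K * y powr (mu + real k) * Dser (mu + real k + 1) (x * y)" for k
  proof -
    have e: "mu + real (Suc k) = (mu + real k) + 1" by simp
    show ?thesis unfolding p_def K_def e using Pser_diff[of "mu + real k" y x] mu x y by simp
  qed
  have dpos: "p k - p (Suc k) > 0" for k
    unfolding pd using K y mu x by (intro mult_pos_pos Dser_pos) auto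
  have tur: "(p (Suc k) - p (Suc (Suc k)))^2 > (p k - p (Suc k)) * (p (Suc (Suc k)) - p (Suc (Suc (Suc k))))" for k
  proof -
    define A where "A = mu + real k + 1"
    have A: "A > 0" using mu by (simp add: A_def)
    have e1: "mu + real (Suc k) = A" "mu + real (Suc (Suc k)) = A + 1" "mu + real (Suc k) + 1 = A + 1"
      "mu + real (Suc (Suc k)) + 1 = A + 2" "mu + real k = A - 1"
      by (simp_all add: A_def)
    define Y where "Y = y powr A"
    have Y1: "y powr (A + 1) = Y * y" "y powr (A - 1) = Y / y" using y
      by (simp_all add: Y_def powr_add powr_diff)
    have Yp: "Y > 0" using y by (simp add: Y_def)
    have "(p (Suc k) - p (Suc (Suc k)))^2 - (p k - p (Suc k)) * (p (Suc (Suc k)) - p (Suc (Suc (Suc k))))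
       = (K * Y)^2 * ((Dser (A+1) (x*y))^2 - Dser A (x*y) * Dser (A+2) (x*y))"
      unfolding pd e1 A_def[symmetric] Y1 Y_def[symmetric] using y
      by (simp add: power2_eq_square field_simps)
    moreover have "(K * Y)^2 * ((Dser (A+1) (x*y))^2 - Dser A (x*y) * Dser (A+2) (x*y)) > 0"
      using D_turan[OF A, of "x*y"] K Yp x y by simp
    ultimately show ?thesis by simp
  qed
  have lim: "p \<longlonglongrightarrow> 0" unfolding p_def using Pser_lim[OF mu y x] .
  have "(p 1)^2 - p 0 * p 2 > 0" by (rule turan_seq[OF dpos tur lim])
  moreover have "p 0 = marcumP mu x y" "p 1 = marcumP (mu + 1) x y" "p 2 = marcumP (mu + 2) x y"
    unfolding p_def using marcum_Pser mu x y by simp_all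
  ultimately show ?thesis by simp
qed


end
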